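(* Let $(M,d)$ be a bounded metric space and let $\mathcal S$ be a group acting on $M$ such that each $s\in\mathcal S$ is an orbit-nonexpansive self-mapping of $M$. Then $\mathcal S$ is a family of interlaced orbit-nonexpansive mappings, i.e. $d(tx,sy)\le \sup\{D(x,o_r(y)): r\in\mathcal S\}$ for all $s,t\in\mathcal S$ and $x,y\in M$.
   Context: For a metric space $(M,d)$, a mapping $T:M\to M$ and $x\in M$, the orbit of $x$ is $o_T(x)=\{x\}\cup\{T^nx:n\in\mathbb N\}$. For $x\in M$ and bounded $A\subseteq M$, $D(x,A)=\sup\{d(x,a):a\in A\}$. A mapping $T:M\to M$ is orbit-nonexpansive if $d(Tx,Ty)\le D(x,o_T(y))$ for all $x,y\in M$. A group $\mathcal S$ acts on $M$ if each $s\in\mathcal S$ defines a map $M\to M$, the identity element acts as the identity map, and $(s\cdot t)(x)=s(t(x))$ for all $s,t\in\mathcal S$, $x\in M$. A family $\mathcal F$ of self-mappings of a bounded metric space $M$ is a family of interlaced orbit-nonexpansive mappings if $d(Tx,Sy)\le\sup\{D(x,o_R(y)):R\in\mathcal F\}$ for all $T,S\in\mathcal F$ and $x,y\in M$. *)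

theory Defs
  imports "HOL-Analysis.Analysis" "HOL-Algebra.Group"
begin

definition orbit :: "('a \<Rightarrow> 'a) \<Rightarrow> 'a \<Rightarrow> 'a set" where
  "orbit T x = {x} \<union> {(T ^^ n) x | n. n \<ge> 1}"

definition Dsup :: "('a \<Rightarrow> 'a \<Rightarrow> real) \<Rightarrow> 'a \<Rightarrow> 'a set \<Rightarrow> real" where
  "Dsup d x A = (SUP a\<in>A. d x a)"

definition orbit_nonexpansive :: "'a set \<Rightarrow> ('a \<Rightarrow> 'a \<Rightarrow> real) \<Rightarrow> ('a \<Rightarrow> 'a) \<Rightarrow> bool" where
  "orbit_nonexpansive M d T \<longleftrightarrow>
     (\<forall>x\<in>M. T x \<in> M) \<and> (\<forall>x\<in>M. \<forall>y\<in>M. d (T x) (T y) \<le> Dsup d x (orbit T y))"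

definition interlaced_orbit_nonexpansive ::
  "'a set \<Rightarrow> ('a \<Rightarrow> 'a \<Rightarrow> real) \<Rightarrow> ('a \<Rightarrow> 'a) set \<Rightarrow> bool" where
  "interlaced_orbit_nonexpansive M d F \<longleftrightarrow>
     (\<forall>T\<in>F. \<forall>x\<in>M. T x \<in> M) \<and>
     (\<forall>T\<in>F. \<forall>S\<in>F. \<forall>x\<in>M. \<forall>y\<in>M. d (T x) (S y) \<le> (SUP R\<in>F. Dsup d x (orbit R y)))"

definition group_acts_on :: "('g, 'b) monoid_scheme \<Rightarrow> 'a set \<Rightarrow> ('g \<Rightarrow> 'a \<Rightarrow> 'a) \<Rightarrow> bool" where
  "group_acts_on G M \<phi> \<longleftrightarrow>
     group G \<and>
     (\<forall>s\<in>carrier G. \<forall>x\<in>M. \<phi> s x \<in> M) \<and>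
     (\<forall>x\<in>M. \<phi> \<one>\<^bsub>G\<^esub> x = x) \<and>
     (\<forall>s\<in>carrier G. \<forall>t\<in>carrier G. \<forall>x\<in>M. \<phi> (s \<otimes>\<^bsub>G\<^esub> t) x = \<phi> s (\<phi> t x))"

end

theory Submission
  imports Defs
begin

lemma orbit_in:
  assumes A: "group_acts_on G M \<phi>" and g: "g \<in> carrier G" and t: "t \<in> carrier G" and y: "y \<in> M"
  shows "\<exists>h\<in>carrier G. (\<phi> t ^^ n) (\<phi> g y) = \<phi> h y"
proof (induction n)
  case 0 then show ?case using g by auto
next
  case (Suc n)
  then obtain h where h: "h \<in> carrier G" "(\<phi> t ^^ n) (\<phi> g y) = \<phi> h y" by blast
  have gr: "group G" using A by (simp add: group_acts_on_def)
  have "(\<phi> t ^^ Suc n) (\<phi> g y) = \<phi> (t \<otimes>\<^bsub>G\<^esub> h) y"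
    using A h t y by (simp add: group_acts_on_def)
  moreover have "t \<otimes>\<^bsub>G\<^esub> h \<in> carrier G" using gr h t by (simp add: group.is_monoid monoid.m_closed)
  ultimately show ?case by blast
qed

theorem proposition3p2:
  fixes M :: "'a set" and d :: "'a \<Rightarrow> 'a \<Rightarrow> real"
    and G :: "('g, 'b) monoid_scheme" and \<phi> :: "'g \<Rightarrow> 'a \<Rightarrow> 'a"
  assumes "Metric_space M d"
    and "Metric_space.mbounded M d M"
    and "group_acts_on G M \<phi>"
    and "\<forall>s\<in>carrier G. orbit_nonexpansive M d (\<phi> s)"
  shows "interlaced_orbit_nonexpansive M d (\<phi> ` carrier G)"
proof -
  interpret Metric_space M d by fact
  obtain B where B: "\<forall>x\<in>M. \<forall>y\<in>M. d x y \<le> B" using assms(2) mbounded_alt by blast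
  have gr: "group G" using assms(3) by (simp add: group_acts_on_def)
  have act: "\<And>s x. s \<in> carrier G \<Longrightarrow> x \<in> M \<Longrightarrow> \<phi> s x \<in> M"
    using assms(3) by (simp add: group_acts_on_def)
  have orbM: "\<And>R y. R \<in> carrier G \<Longrightarrow> y \<in> M \<Longrightarrow> orbit (\<phi> R) y \<subseteq> M"
  proof
    fix R y w assume R: "R \<in> carrier G" and y: "y \<in> M" and w: "w \<in> orbit (\<phi> R) y"
    have "\<And>n. (\<phi> R ^^ n) y \<in> M"
    proof -
      fix n show "(\<phi> R ^^ n) y \<in> M" by (induction n) (auto simp: y act R)
    qed
    then show "w \<in> M" using w y by (auto simp: orbit_def)
  qed
  have Dle: "\<And>x R y. x \<in> M \<Longrightarrow> R \<in> carrier G \<Longrightarrow> y \<in> M \<Longrightarrow> Dsup d x (orbit (\<phi> R) y) \<le> B"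
    unfolding Dsup_def
  proof (rule cSUP_least)
    fix x R y assume "x \<in> M" "R \<in> carrier G" "y \<in> M"
    then show "orbit (\<phi> R) y \<noteq> {}" by (auto simp: orbit_def)
    fix w assume "w \<in> orbit (\<phi> R) y"
    then show "d x w \<le> B" using orbM B \<open>x \<in> M\<close> \<open>R \<in> carrier G\<close> \<open>y \<in> M\<close> by blast
  qed
  have Dge: "\<And>x R y w. x \<in> M \<Longrightarrow> R \<in> carrier G \<Longrightarrow> y \<in> M \<Longrightarrow> w \<in> orbit (\<phi> R) y \<Longrightarrow> d x w \<le> Dsup d x (orbit (\<phi> R) y)"
    unfolding Dsup_def
    apply (rule cSUP_upper, assumption)
    apply (rule bdd_aboveI[where M=B])
    using orbM B by blast
  show ?thesis
    unfolding interlaced_orbit_nonexpansive_def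
  proof (intro conjI ballI)
    fix T x assume "T \<in> \<phi> ` carrier G" "x \<in> M" then show "T x \<in> M" using act by auto
  next
    fix T S x y assume T: "T \<in> \<phi> ` carrier G" and S: "S \<in> \<phi> ` carrier G" and x: "x \<in> M" and y: "y \<in> M"
    then obtain t s where t: "t \<in> carrier G" "T = \<phi> t" and s: "s \<in> carrier G" "S = \<phi> s" by auto
    define g where "g = inv\<^bsub>G\<^esub> t \<otimes>\<^bsub>G\<^esub> s"
    have g: "g \<in> carrier G" using gr t s by (simp add: g_def group.inv_closed monoid.m_closed group.is_monoid)
    have tg: "t \<otimes>\<^bsub>G\<^esub> g = s" using gr t s
      by (simp add: g_def group.inv_closed monoid.m_assoc[symmetric] group.is_monoid group.r_inv monoid.l_one)
    define z where "z = \<phi> g y"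
    have z: "z \<in> M" using act g y by (simp add: z_def)
    have Sy: "S y = T z" using assms(3) t s g y tg unfolding z_def group_acts_on_def by metis
    let ?R = "SUP R\<in>\<phi> ` carrier G. Dsup d x (orbit R y)"
    have bdd: "bdd_above ((\<lambda>R. Dsup d x (orbit R y)) ` \<phi> ` carrier G)"
      by (rule bdd_aboveI[where M=B]) (auto intro: Dle x y)
    have "d (T x) (S y) \<le> Dsup d x (orbit T z)"
      using assms(4) t x z Sy by (auto simp: orbit_nonexpansive_def)
    also have "\<dots> \<le> ?R"
      unfolding Dsup_def[of d x "orbit T z"]
    proof (rule cSUP_least)
      show "orbit T z \<noteq> {}" by (auto simp: orbit_def)
    next
      fix w assume w: "w \<in> orbit T z"
      have "\<exists>n. w = (\<phi> t ^^ n) (\<phi> g y)"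
      proof (cases "w = z")
        case True then show ?thesis by (intro exI[of _ 0]) (simp add: z_def)
      next
        case False then show ?thesis using w by (auto simp: orbit_def z_def t(2))
      qed
      then obtain n where "w = (\<phi> t ^^ n) (\<phi> g y)" by blast
      then obtain h where h: "h \<in> carrier G" "w = \<phi> h y" using orbit_in[OF assms(3) g t(1) y] by metis
      have "w \<in> orbit (\<phi> h) y" using h by (auto simp: orbit_def intro!: exI[of _ 1])
      then have "d x w \<le> Dsup d x (orbit (\<phi> h) y)" using Dge x h y by blast
      also have "\<dots> \<le> ?R" using h bdd by (intro cSUP_upper2[where x="\<phi> h"]) auto
      finally show "d x w \<le> ?R" .
    qed
    finally show "d (T x) (S y) \<le> ?R" .
  qed
qed

end
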